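(* Let $0<\beta\le1$ and let $f(z)=z+\sum_{n\ge2}a_nz^n\in\mathcal S^*_{\Sigma,\beta}$. Then $|a_3-a_2^2|\le\beta$.
   Context: Let $\mathbb U=\{z\in\mathbb C:|z|<1\}$; $\Sigma$ is the class of $f(z)=z+\sum_{n\ge2}a_nz^n$ analytic and univalent in $\mathbb U$ whose inverse extends to an analytic univalent function $g=f^{-1}$ on $\mathbb U$. $F\prec G$ means $F=G\circ w$ for some analytic $w:\mathbb U\to\mathbb U$ with $w(0)=0$. $\mathcal S^*_{\Sigma,\beta}$ (strongly bi-starlike of order $\beta$) is the set of $f\in\Sigma$ with $\frac{zf'(z)}{f(z)}\prec\big(\frac{1+z}{1-z}\big)^\beta$ and $\frac{wg'(w)}{g(w)}\prec\big(\frac{1+w}{1-w}\big)^\beta$ (principal power). *)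

theory Defs
  imports "HOL-Analysis.Analysis"
begin

definition unit_disc :: "complex set" where
  "unit_disc = ball 0 1"

definition subordinate :: "(complex \<Rightarrow> complex) \<Rightarrow> (complex \<Rightarrow> complex) \<Rightarrow> bool" where
  "subordinate F G \<longleftrightarrow>
     (\<exists>w. w holomorphic_on unit_disc \<and> w ` unit_disc \<subseteq> unit_disc \<and> w 0 = 0 \<and>
          (\<forall>z\<in>unit_disc. F z = G (w z)))"

definition normalized_univalent :: "(complex \<Rightarrow> complex) \<Rightarrow> bool" where
  "normalized_univalent f \<longleftrightarrow>
     f holomorphic_on unit_disc \<and> inj_on f unit_disc \<and> f 0 = 0 \<and> deriv f 0 = 1"

text \<open>g is an analytic univalent function on U extending the inverse of f
  (i.e. g(f z) = z whenever z and f z lie in U).\<close>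
definition univalent_inverse_extension ::
  "(complex \<Rightarrow> complex) \<Rightarrow> (complex \<Rightarrow> complex) \<Rightarrow> bool" where
  "univalent_inverse_extension f g \<longleftrightarrow>
     g holomorphic_on unit_disc \<and> inj_on g unit_disc \<and>
     (\<forall>z\<in>unit_disc. f z \<in> unit_disc \<longrightarrow> g (f z) = z)"

definition bi_univalent :: "(complex \<Rightarrow> complex) \<Rightarrow> bool" where
  "bi_univalent f \<longleftrightarrow> normalized_univalent f \<and> (\<exists>g. univalent_inverse_extension f g)"

text \<open>The function z h'(z)/h(z), with its removable singularity at 0 filled in
  by the value 1 (h(0)=0, h'(0)=1).\<close>
definition starlike_quot :: "(complex \<Rightarrow> complex) \<Rightarrow> complex \<Rightarrow> complex" where
  "starlike_quot h z = (if z = 0 then 1 else z * deriv h z / h z)"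

definition strong_starlike_majorant :: "real \<Rightarrow> complex \<Rightarrow> complex" where
  "strong_starlike_majorant \<beta> z = ((1 + z) / (1 - z)) powr (of_real \<beta>)"

definition strongly_bi_starlike :: "real \<Rightarrow> (complex \<Rightarrow> complex) \<Rightarrow> bool" where
  "strongly_bi_starlike \<beta> f \<longleftrightarrow>
     normalized_univalent f \<and>
     (\<exists>g. univalent_inverse_extension f g \<and>
          subordinate (starlike_quot f) (strong_starlike_majorant \<beta>) \<and>
          subordinate (starlike_quot g) (strong_starlike_majorant \<beta>))"

definition taylor_coeff :: "(complex \<Rightarrow> complex) \<Rightarrow> nat \<Rightarrow> complex" where
  "taylor_coeff f n = (deriv ^^ n) f 0 / fact n"

end

theory Submission
  imports Defs "HOL-Complex_Analysis.Complex_Analysis"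
begin

lemma comp_d1:
  assumes "h holomorphic_on T" "open T" "k holomorphic_on S" "open S" "k ` S \<subseteq> T" "z \<in> S"
  shows "deriv (\<lambda>x. h (k x)) z = deriv h (k z) * deriv k z"
proof -
  have "k field_differentiable at z" using assms holomorphic_on_imp_differentiable_at by blast
  moreover have "h field_differentiable at (k z)" using assms holomorphic_on_imp_differentiable_at by blast
  ultimately show ?thesis using deriv_chain[of k z h] by (simp add: o_def)
qed

lemma comp_d2:
  assumes "h holomorphic_on T" "open T" "k holomorphic_on S" "open S" "k ` S \<subseteq> T" "z \<in> S"
  shows "(deriv ^^ 2) (\<lambda>x. h (k x)) z = (deriv ^^ 2) h (k z) * (deriv k z)^2 + deriv h (k z) * (deriv ^^ 2) k z"
proof -
  have F: "(\<lambda>x. h (k x)) holomorphic_on S"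
    using holomorphic_on_compose_gen[OF assms(3,1,5)] by (simp add: o_def)
  have P: "(\<lambda>x. deriv h (k x) * deriv k x) holomorphic_on S"
    by (intro holomorphic_intros holomorphic_deriv_compose[OF assms(1,3,5,2)] holomorphic_deriv assms)
  have "(deriv ^^ 1) (deriv (\<lambda>x. h (k x))) z = (deriv ^^ 1) (\<lambda>x. deriv h (k x) * deriv k x) z"
    by (rule higher_deriv_transform_within_open[OF holomorphic_deriv[OF F assms(4)] P assms(4,6)])
       (rule comp_d1[OF assms(1-5)])
  then have e: "(deriv ^^ 2) (\<lambda>x. h (k x)) z = deriv (\<lambda>x. deriv h (k x) * deriv k x) z"
    by (simp add: numeral_2_eq_2)
  have dh: "deriv h holomorphic_on T" using assms holomorphic_deriv by blast
  have dk: "deriv k holomorphic_on S" using assms holomorphic_deriv by blast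
  have d1: "(\<lambda>x. deriv h (k x)) field_differentiable at z"
    using holomorphic_deriv_compose[OF assms(1,3,5,2)] assms holomorphic_on_imp_differentiable_at by blast
  have d2: "deriv k field_differentiable at z"
    using dk assms holomorphic_on_imp_differentiable_at by blast
  have "deriv (\<lambda>x. deriv h (k x) * deriv k x) z = deriv (\<lambda>x. deriv h (k x)) z * deriv k z + deriv h (k z) * deriv (deriv k) z"
    using deriv_mult[OF d1 d2] by simp
  also have "deriv (\<lambda>x. deriv h (k x)) z = deriv (deriv h) (k z) * deriv k z"
    by (rule comp_d1[OF dh assms(2-6)])
  finally show ?thesis unfolding e by (simp add: numeral_2_eq_2 power2_eq_square algebra_simps)
qed

lemma mob_re: assumes "cmod z < 1" shows "Re ((1 + z) / (1 - z)) > 0"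
proof -
  have z1: "z \<noteq> 1" using assms by auto
  have "(Re z)^2 + (Im z)^2 < 1" using assms
    by (metis cmod_power2 less_1_mult norm_ge_zero power2_eq_square abs_square_less_1 abs_norm_cancel)
  then have "Re (1+z) * Re (1-z) + Im (1+z) * Im (1-z) > 0"
    by (simp add: power2_eq_square algebra_simps)
  moreover have "(1 - Re z)^2 + (Im z)^2 > 0" using z1
    by (metis add_eq_0_iff2 complex_eq_iff diff_zero eq_iff_diff_eq_0 one_complex.simps(1) one_complex.simps(2) power_zero_numeral sum_power2_gt_zero_iff)
  ultimately show ?thesis by (simp add: Re_divide divide_pos_pos)
qed

lemma mob_notin: assumes "cmod z < 1" shows "(1 + z) / (1 - z) \<notin> \<real>\<^sub>\<le>\<^sub>0"
proof
  assume "(1 + z) / (1 - z) \<in> \<real>\<^sub>\<le>\<^sub>0"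
  then obtain r where "(1 + z) / (1 - z) = of_real r" "r \<le> 0" by (auto elim!: nonpos_Reals_cases)
  with mob_re[OF assms] show False by simp
qed

lemma p_holo: "strong_starlike_majorant \<beta> holomorphic_on unit_disc"
  unfolding strong_starlike_majorant_def[abs_def] unit_disc_def
  by (intro holomorphic_intros) (force dest: mob_notin)+

lemma p_deriv: "deriv (strong_starlike_majorant \<beta>) 0 = 2 * of_real \<beta>"
proof -
  have m: "((\<lambda>z::complex. (1 + z) / (1 - z)) has_field_derivative 2) (at 0)"
    by (auto intro!: derivative_eq_intros)
  have "((\<lambda>z. ((1 + z) / (1 - z)) powr (complex_of_real \<beta>)) has_field_derivative
      complex_of_real \<beta> * 2) (at 0)"
    using DERIV_chain2[OF has_field_derivative_powr m, of "complex_of_real \<beta>"] by simp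
  then show ?thesis unfolding strong_starlike_majorant_def[abs_def]
    by (intro DERIV_imp_deriv) (simp add: mult.commute)
qed

lemma w_bound:
  assumes "w holomorphic_on unit_disc" "w ` unit_disc \<subseteq> unit_disc"
  shows "cmod ((deriv ^^ 2) w 0) \<le> 2"
proof (rule ccontr)
  define N where "N = cmod ((deriv ^^ 2) w 0)"
  assume "\<not> ?thesis"
  then have N: "N > 2" by (simp add: N_def)
  define r where "r = sqrt ((2/N + 1)/2)"
  have r2: "r^2 = (2/N + 1)/2" using N by (simp add: r_def)
  have "2/N < 1" using N by simp
  then have r2l: "r^2 < 1" and r2g: "r^2 > 2/N" using r2 by auto
  have "2/N + 1 > 0" using N by (simp add: add_pos_pos)
  then have r0: "r > 0" by (simp add: r_def)
  have r1: "r < 1" using r2l r0 by (simp add: power_less_one_iff abs_square_less_1)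
  have sub: "cball 0 r \<subseteq> unit_disc" using r1 by (auto simp: unit_disc_def)
  have "N \<le> fact 2 * 1 / r^2"
    unfolding N_def
  proof (rule Cauchy_inequality)
    show "w holomorphic_on ball 0 r" using assms(1) sub holomorphic_on_subset by (meson ball_subset_cball subset_trans)
    show "continuous_on (cball 0 r) w" using assms(1) sub
      by (meson holomorphic_on_imp_continuous_on continuous_on_subset)
    show "0 < r" by fact
    fix x :: complex assume "cmod (0 - x) = r"
    then have "x \<in> unit_disc" using sub by auto
    then have "w x \<in> unit_disc" using assms(2) by blast
    then show "cmod (w x) \<le> 1" by (simp add: unit_disc_def)
  qed
  also have "\<dots> < N" using r2g r0 N by (simp add: field_simps)
  finally show False by simp
qed

lemma sub_derivs:
  fixes F w :: "complex \<Rightarrow> complex" and \<beta> :: real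
  defines "p \<equiv> strong_starlike_majorant \<beta>"
  assumes w: "w holomorphic_on unit_disc" "w ` unit_disc \<subseteq> unit_disc" "w 0 = 0"
    and F: "\<forall>z\<in>unit_disc. F z = p (w z)"
  shows "F holomorphic_on unit_disc" "deriv F 0 = deriv p 0 * deriv w 0"
    "(deriv ^^ 2) F 0 = (deriv ^^ 2) p 0 * (deriv w 0)^2 + deriv p 0 * (deriv ^^ 2) w 0"
proof -
  have o: "open unit_disc" and z0: "0 \<in> unit_disc" by (auto simp: unit_disc_def)
  have ph: "p holomorphic_on unit_disc" unfolding p_def by (rule p_holo)
  have C: "(\<lambda>z. p (w z)) holomorphic_on unit_disc"
    using holomorphic_on_compose_gen[OF w(1) ph w(2)] by (simp add: o_def)
  show FH: "F holomorphic_on unit_disc" using holomorphic_transform[OF C] F by auto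
  have e: "(deriv ^^ n) F 0 = (deriv ^^ n) (\<lambda>z. p (w z)) 0" for n
    by (rule higher_deriv_transform_within_open[OF FH C o z0]) (use F in auto)
  show "deriv F 0 = deriv p 0 * deriv w 0"
    using e[of 1] comp_d1[OF ph o w(1) o w(2) z0] w(3) by simp
  show "(deriv ^^ 2) F 0 = (deriv ^^ 2) p 0 * (deriv w 0)^2 + deriv p 0 * (deriv ^^ 2) w 0"
    using e[of 2] comp_d2[OF ph o w(1) o w(2) z0] w(3) by simp
qed

theorem corollary3p13:
  fixes f :: "complex \<Rightarrow> complex" and \<beta> :: real
  assumes "0 < \<beta>" and "\<beta> \<le> 1"
    and "strongly_bi_starlike \<beta> f"
  shows "cmod (taylor_coeff f 3 - (taylor_coeff f 2)\<^sup>2) \<le> \<beta>"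
proof -
  define p where "p = strong_starlike_majorant \<beta>"
  define D where "D = unit_disc"
  have oD: "open D" and D0: "0 \<in> D" by (auto simp: D_def unit_disc_def)
  obtain g where nu: "normalized_univalent f" and gi: "univalent_inverse_extension f g"
    and s1: "subordinate (starlike_quot f) p" and s2: "subordinate (starlike_quot g) p"
    using assms(3) unfolding strongly_bi_starlike_def p_def by blast
  have fh: "f holomorphic_on D" and finj: "inj_on f D" and f0: "f 0 = 0" and f'0: "deriv f 0 = 1"
    using nu by (auto simp: normalized_univalent_def D_def)
  have gh: "g holomorphic_on D" and gf: "\<And>z. z \<in> D \<Longrightarrow> f z \<in> D \<Longrightarrow> g (f z) = z"
    using gi by (auto simp: univalent_inverse_extension_def D_def)
  obtain w1 where w1: "w1 holomorphic_on unit_disc" "w1 ` unit_disc \<subseteq> unit_disc" "w1 0 = 0"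
     "\<forall>z\<in>unit_disc. starlike_quot f z = p (w1 z)"
    using s1 unfolding subordinate_def by blast
  obtain w2 where w2: "w2 holomorphic_on unit_disc" "w2 ` unit_disc \<subseteq> unit_disc" "w2 0 = 0"
     "\<forall>z\<in>unit_disc. starlike_quot g z = p (w2 z)"
    using s2 unfolding subordinate_def by blast
  note S1 = sub_derivs[OF w1[unfolded p_def]] and S2 = sub_derivs[OF w2[unfolded p_def]]
  define qf where "qf = starlike_quot f"
  define qg where "qg = starlike_quot g"
  have qfh: "qf holomorphic_on D" using S1(1) by (simp add: qf_def D_def)
  have qgh: "qg holomorphic_on D" using S2(1) by (simp add: qg_def D_def)
  have qf0: "qf 0 = 1" and qg0: "qg 0 = 1" by (simp_all add: qf_def qg_def starlike_quot_def)
  have fnz: "f z \<noteq> 0" if "z \<in> D" "z \<noteq> 0" for z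
    using finj that D0 f0 by (metis inj_on_def)
  define P1 where "P1 = deriv p 0"
  define P2 where "P2 = (deriv ^^ 2) p 0"
  define A2 where "A2 = (deriv ^^ 2) f 0"
  define A3 where "A3 = (deriv ^^ 3) f 0"
  define Q1 where "Q1 = deriv qf 0"
  define Q2 where "Q2 = (deriv ^^ 2) qf 0"
  define R1 where "R1 = deriv qg 0"
  define R2 where "R2 = (deriv ^^ 2) qg 0"
  define u1 where "u1 = deriv w1 0"
  define u2 where "u2 = (deriv ^^ 2) w1 0"
  define v1 where "v1 = deriv w2 0"
  define v2 where "v2 = (deriv ^^ 2) w2 0"
  have E1: "Q1 = P1 * u1" and E2: "Q2 = P2 * u1^2 + P1 * u2"
    using S1(2,3) by (simp_all add: Q1_def Q2_def P1_def P2_def u1_def u2_def qf_def p_def)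
  have E3: "R1 = P1 * v1" and E4: "R2 = P2 * v1^2 + P1 * v2"
    using S2(2,3) by (simp_all add: R1_def R2_def P1_def P2_def v1_def v2_def qg_def p_def)
  have P1v: "P1 = 2 * of_real \<beta>" using p_deriv by (simp add: P1_def p_def)
  have ub: "cmod u2 \<le> 2" using w_bound[OF w1(1,2)] by (simp add: u2_def)
  have vb: "cmod v2 \<le> 2" using w_bound[OF w2(1,2)] by (simp add: v2_def)
  have idf: "qf z * f z = z * deriv f z" if "z \<in> D" for z
  proof (cases "z = 0")
    case True then show ?thesis by (simp add: f0)
  next
    case False then show ?thesis using fnz[OF that False] by (simp add: qf_def starlike_quot_def)
  qed
  have dfh: "deriv f holomorphic_on D" using fh oD by (rule holomorphic_deriv)
  have hd: "(deriv ^^ i) (deriv f) = (deriv ^^ (Suc i)) f" for i by (metis funpow_Suc_right comp_apply)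
  have L: "(deriv ^^ n) (\<lambda>z. qf z * f z) 0 = (deriv ^^ n) (\<lambda>z. z * deriv f z) 0" for n
    by (rule higher_deriv_transform_within_open[OF _ _ oD D0])
       (auto intro!: holomorphic_intros qfh fh dfh idf)
  note M1 = higher_deriv_mult[OF qfh fh oD D0] and M2 = higher_deriv_mult[OF holomorphic_on_ident dfh oD D0]
  have L2: "A2 + 2*Q1 = 2*A2"
    using L[of 2] unfolding M1 M2 hd
    by (simp add: numeral_2_eq_2 A2_def Q1_def f0 f'0 qf0)
  have L3: "A3 + 3*Q1*A2 + 3*Q2 = 3*A3"
    using L[of 3] unfolding M1 M2 hd
    by (simp add: numeral_3_eq_3 numeral_2_eq_2 A2_def A3_def Q1_def Q2_def f0 f'0 qf0)
  define S where "S = D \<inter> f -` D"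
  have oS: "open S"
    using continuous_open_preimage[OF holomorphic_on_imp_continuous_on[OF fh] oD oD] by (simp add: S_def)
  have S0: "0 \<in> S" using D0 f0 by (simp add: S_def)
  have SD: "S \<subseteq> D" and fS: "f ` S \<subseteq> D" by (auto simp: S_def)
  have fhS: "f holomorphic_on S" using fh SD holomorphic_on_subset by blast
  have gfS: "g (f z) = z" if "z \<in> S" for z using gf that by (auto simp: S_def)
  have gfh: "(\<lambda>z. g (f z)) holomorphic_on S"
    using holomorphic_on_compose_gen[OF fhS gh fS] by (simp add: o_def)
  have dgf: "deriv g (f z) * deriv f z = 1" if "z \<in> S" for z
  proof -
    have "(deriv ^^ 1) (\<lambda>z. g (f z)) z = (deriv ^^ 1) (\<lambda>z. z) z"
      by (rule higher_deriv_transform_within_open[OF gfh holomorphic_on_ident oS that]) (rule gfS)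
    then show ?thesis using comp_d1[OF gh oD fhS oS fS that] by simp
  qed
  have idg: "qg (f z) * qf z = 1" if "z \<in> S" for z
  proof (cases "z = 0")
    case True then show ?thesis by (simp add: f0 qf0 qg0)
  next
    case False
    have zD: "z \<in> D" using that SD by auto
    have fz: "f z \<noteq> 0" using fnz[OF zD False] .
    have df: "deriv f z \<noteq> 0" using dgf[OF that] by auto
    show ?thesis using fz df False dgf[OF that] gfS[OF that]
      by (simp add: qf_def qg_def starlike_quot_def field_simps)
  qed
  define H where "H = (\<lambda>z. qg (f z))"
  have Hh: "H holomorphic_on S"
    using holomorphic_on_compose_gen[OF fhS qgh fS] by (simp add: o_def H_def)
  have qfhS: "qf holomorphic_on S" using qfh SD holomorphic_on_subset by blast
  have LH: "(deriv ^^ n) (\<lambda>z. H z * qf z) 0 = (deriv ^^ n) (\<lambda>z. 1) 0" for n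
    by (rule higher_deriv_transform_within_open[OF _ _ oS S0])
       (intro holomorphic_intros Hh qfhS | simp add: H_def idg)+
  note M3 = higher_deriv_mult[OF Hh qfhS oS S0]
  have H0: "H 0 = 1" by (simp add: H_def f0 qg0)
  have N1: "deriv H 0 + Q1 = 0" using LH[of 1] unfolding M3 by (simp add: H0 qf0 Q1_def add.commute)
  have N2: "(deriv ^^ 2) H 0 + 2 * deriv H 0 * Q1 + Q2 = 0"
    using LH[of 2] unfolding M3 by (simp add: numeral_2_eq_2 H0 qf0 Q1_def Q2_def algebra_simps)
  have HD1: "deriv H 0 = R1"
    using comp_d1[OF qgh oD fhS oS fS S0] by (simp add: H_def f0 f'0 R1_def)
  have HD2: "(deriv ^^ 2) H 0 = R2 + R1 * A2"
    using comp_d2[OF qgh oD fhS oS fS S0] by (simp add: H_def f0 f'0 R1_def R2_def A2_def)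
  have P1nz: "P1 \<noteq> 0" using assms(1) P1v by simp
  have Q1v: "Q1 = A2/2" using L2 by (simp add: field_simps)
  have R1v: "R1 = - Q1" using N1 HD1 by (metis add.commute add_eq_0_iff)
  have "P1 * u1 = P1 * (- v1)" using E1 E3 R1v by algebra
  then have uv: "u1 = - v1" using P1nz mult_left_cancel by blast
  have R2v: "R2 = A2^2 - Q2" using N2 HD1 HD2 R1v Q1v by algebra
  have Q2v: "Q2 = 2*A3/3 - A2^2/2" using L3 Q1v by algebra
  have QR: "Q2 - R2 = P1 * (u2 - v2)" using E2 E4 uv by (simp add: algebra_simps)
  have key: "taylor_coeff f 3 - (taylor_coeff f 2)\<^sup>2 = P1 * (u2 - v2) / 8"
  proof -
    have "taylor_coeff f 3 - (taylor_coeff f 2)\<^sup>2 = A3/6 - (A2/2)^2"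
      by (simp add: taylor_coeff_def A2_def A3_def fact_numeral)
    also have "\<dots> = (Q2 - R2)/8" unfolding R2v Q2v by (simp add: field_simps power2_eq_square)
    finally show ?thesis using QR by simp
  qed
  have "cmod (P1 * (u2 - v2) / 8) = 2 * \<beta> * cmod (u2 - v2) / 8"
    using assms(1) by (simp add: P1v norm_mult norm_divide)
  also have "\<dots> \<le> 2 * \<beta> * 4 / 8"
  proof -
    have "cmod (u2 - v2) \<le> 4" using ub vb norm_triangle_ineq4[of u2 v2] by linarith
    then show ?thesis using assms(1) by (simp add: divide_right_mono)
  qed
  finally have "cmod (P1 * (u2 - v2) / 8) \<le> \<beta>" by simp
  then show ?thesis unfolding key .
qed
end
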